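(* Let $(L,\le,\bot,\top)$ be a complete lattice and $(\&_i,\swarrow^i,\nwarrow_i)$, $i=1,\dots,n$, adjoint triples on $L$ with $x\,\&_i\,\top=\top\,\&_i\,x=x$ for all $x\in L$ and all $i$. Let $(A,B,R,\sigma)$ be a normalized context whose concept lattice $\mathcal{M}$ satisfies the ascending chain condition and which has a decomposition into independent subcontexts $\{(A_\lambda,B_\lambda,R_\lambda,\sigma_\lambda)\mid\lambda\in\Lambda\}$. Then for every $\lambda\in\Lambda$ the set $$K_\lambda=\{\langle g,f\rangle\in\mathcal{M}\mid\langle g,f\rangle=\textstyle\bigwedge M_g^{A_\lambda}\}\cup\{\langle g_\top,f_\bot\rangle,\langle g_\bot,f_\top\rangle\}$$ is a complete block of $\mathcal{M}$.
   Context: An adjoint triple on $L$ is a triple of maps $\&,\swarrow,\nwarrow\colon L\times L\to L$ with $x\le z\swarrow y\iff x\& y\le z\iff y\le z\nwarrow x$. A context is $(A,B,R,\sigma)$ with $A,B$ non-empty, $R\colon A\times B\to L$, $\sigma\colon A\times B\to\{1,\dots,n\}$; normalized means every $a\in A$ has $b_1,b_2$ with $R(a,b_1)\ne\bot$, $R(a,b_2)=\bot$, and every $b\in B$ has $a_1,a_2$ with $R(a_1,b)\ne\bot$, $R(a_2,b)=\bot$. For $g\colon B\to L$, $f\colon A\to L$: $g^\uparrow(a)=\inf_{b}R(a,b)\swarrow^{\sigma(a,b)}g(b)$, $f^\downarrow(b)=\inf_{a}R(a,b)\nwarrow_{\sigma(a,b)}f(a)$. $\mathcal{M}$ is the complete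 lattice of pairs $\langle g,f\rangle$ with $g^\uparrow=f$, $f^\downarrow=g$, ordered by $g_1\le g_2$ pointwise; its top is $\langle g_\top,f_\bot\rangle$ and bottom $\langle g_\bot,f_\top\rangle$, where $g_\top,g_\bot,f_\top,f_\bot$ are constant maps with the indicated values. $\phi_{a,x}\colon A\to L$ takes value $x$ at $a$ and $\bot$ elsewhere. Meet-irreducible concepts (elements $c\ne$ top with $c=d\wedge e\Rightarrow c\in\{d,e\}$) all have the form $\langle\phi_{a,x}^\downarrow,\phi_{a,x}^{\downarrow\uparrow}\rangle$. For $A'\subseteq A$, $M_F^{A'}$ is the set of meet-irreducible concepts equal to $\langle\phi_{a,x}^\downarrow,\phi_{a,x}^{\downarrow\uparrow}\rangle$ for some $a\in A'$, $x\in L$, and $M_g^{A'}=\{c\in M_F^{A'}\mid\langle g,f\rangle\preceq c\}$. Separable subcontext: $(Y,X,R_{Y\times X},\sigma_{Y\times X})$ with $Y\subsetneq A$, $X\subsetneq B$ non-empty, some $R(a,b)\ne\bot$ with $a\in Y,b\in X$, $R=\bot$ on $Y\times(B\setminus X)$ and on $(A\setminus Y)\times X$. $\&$ has zero-divisors if $x\&y=\bot$ for some $x,y\neq\bot$. Decomposition into independent subcontexts: non-empty $\Lambda$, each $(A_\lambda,B_\lambda,R_\lambda,\sigma_\lambda)$ (restrictions) separable, $\{A_\lambda\}$ partitions $A$, $\{B_\lambda\}$ partitions $B$, and $\&_{\sigma(a,b)}$ has no zero-divisors whenever $(a,b)\in((A\setminus A_\lambda)\times B_\lambda)\cup(A_\lambda\times(B\setminus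 B_\lambda))$ for some $\lambda$. For a bounded lattice $(M,\preceq,\bot,\top)$, a block is a sublattice $K\subsetneq M$ with $K\setminus\{\bot,\top\}\ne\varnothing$ and $(\{x\mid k\preceq x\}\cup\{x\mid x\preceq k\})\setminus\{\bot,\top\}\subseteq K$ for all $k\in K\setminus\{\bot,\top\}$; it is complete if $\bot,\top\in K$. *)

theory Defs
  imports Main
begin

text \<open>The attribute set A is the type 'a,
the object set B is the type 'b (both non-empty automatically), L is a
complete lattice 'l.  The adjoint triples are indexed by naturals 1..n:
cj i = the conjunctor, ld i = the left implication (z swarrow y written ld i z y),
rd i = the right implication (z nwarrow x written rd i z x).\<close>

definition adjoint_triple :: "('l::complete_lattice \<Rightarrow> 'l \<Rightarrow> 'l) \<Rightarrow> ('l \<Rightarrow> 'l \<Rightarrow> 'l) \<Rightarrow> ('l \<Rightarrow> 'l \<Rightarrow> 'l) \<Rightarrow> bool" where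
  "adjoint_triple c l r \<longleftrightarrow>
     (\<forall>x y z. (x \<le> l z y \<longleftrightarrow> c x y \<le> z) \<and> (c x y \<le> z \<longleftrightarrow> y \<le> r z x))"

definition normalized :: "('a \<Rightarrow> 'b \<Rightarrow> 'l::complete_lattice) \<Rightarrow> bool" where
  "normalized R \<longleftrightarrow>
     (\<forall>a. \<exists>b1 b2. R a b1 \<noteq> bot \<and> R a b2 = bot) \<and>
     (\<forall>b. \<exists>a1 a2. R a1 b \<noteq> bot \<and> R a2 b = bot)"

definition up_op :: "(nat \<Rightarrow> 'l::complete_lattice \<Rightarrow> 'l \<Rightarrow> 'l) \<Rightarrow> ('a \<Rightarrow> 'b \<Rightarrow> 'l) \<Rightarrow> ('a \<Rightarrow> 'b \<Rightarrow> nat)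
    \<Rightarrow> ('b \<Rightarrow> 'l) \<Rightarrow> ('a \<Rightarrow> 'l)" where
  "up_op ld R \<sigma> g = (\<lambda>a. INF b. ld (\<sigma> a b) (R a b) (g b))"

definition down_op :: "(nat \<Rightarrow> 'l::complete_lattice \<Rightarrow> 'l \<Rightarrow> 'l) \<Rightarrow> ('a \<Rightarrow> 'b \<Rightarrow> 'l) \<Rightarrow> ('a \<Rightarrow> 'b \<Rightarrow> nat)
    \<Rightarrow> ('a \<Rightarrow> 'l) \<Rightarrow> ('b \<Rightarrow> 'l)" where
  "down_op rd R \<sigma> f = (\<lambda>b. INF a. rd (\<sigma> a b) (R a b) (f a))"

definition concepts :: "(nat \<Rightarrow> 'l::complete_lattice \<Rightarrow> 'l \<Rightarrow> 'l) \<Rightarrow> (nat \<Rightarrow> 'l \<Rightarrow> 'l \<Rightarrow> 'l)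
    \<Rightarrow> ('a \<Rightarrow> 'b \<Rightarrow> 'l) \<Rightarrow> ('a \<Rightarrow> 'b \<Rightarrow> nat) \<Rightarrow> (('b \<Rightarrow> 'l) \<times> ('a \<Rightarrow> 'l)) set" where
  "concepts ld rd R \<sigma> = {(g, f). up_op ld R \<sigma> g = f \<and> down_op rd R \<sigma> f = g}"

definition cle :: "('b \<Rightarrow> 'l::complete_lattice) \<times> ('a \<Rightarrow> 'l) \<Rightarrow> ('b \<Rightarrow> 'l) \<times> ('a \<Rightarrow> 'l) \<Rightarrow> bool" where
  "cle c d \<longleftrightarrow> fst c \<le> fst d"

definition cInf :: "(nat \<Rightarrow> 'l::complete_lattice \<Rightarrow> 'l \<Rightarrow> 'l) \<Rightarrow> (nat \<Rightarrow> 'l \<Rightarrow> 'l \<Rightarrow> 'l)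
    \<Rightarrow> ('a \<Rightarrow> 'b \<Rightarrow> 'l) \<Rightarrow> ('a \<Rightarrow> 'b \<Rightarrow> nat)
    \<Rightarrow> (('b \<Rightarrow> 'l) \<times> ('a \<Rightarrow> 'l)) set \<Rightarrow> ('b \<Rightarrow> 'l) \<times> ('a \<Rightarrow> 'l)" where
  "cInf ld rd R \<sigma> S = (THE c. c \<in> concepts ld rd R \<sigma> \<and> (\<forall>d\<in>S. cle c d) \<and>
      (\<forall>e\<in>concepts ld rd R \<sigma>. (\<forall>d\<in>S. cle e d) \<longrightarrow> cle e c))"

definition cSup :: "(nat \<Rightarrow> 'l::complete_lattice \<Rightarrow> 'l \<Rightarrow> 'l) \<Rightarrow> (nat \<Rightarrow> 'l \<Rightarrow> 'l \<Rightarrow> 'l)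
    \<Rightarrow> ('a \<Rightarrow> 'b \<Rightarrow> 'l) \<Rightarrow> ('a \<Rightarrow> 'b \<Rightarrow> nat)
    \<Rightarrow> (('b \<Rightarrow> 'l) \<times> ('a \<Rightarrow> 'l)) set \<Rightarrow> ('b \<Rightarrow> 'l) \<times> ('a \<Rightarrow> 'l)" where
  "cSup ld rd R \<sigma> S = (THE c. c \<in> concepts ld rd R \<sigma> \<and> (\<forall>d\<in>S. cle d c) \<and>
      (\<forall>e\<in>concepts ld rd R \<sigma>. (\<forall>d\<in>S. cle d e) \<longrightarrow> cle c e))"

definition ctop :: "('b \<Rightarrow> 'l::complete_lattice) \<times> ('a \<Rightarrow> 'l)" where
  "ctop = ((\<lambda>_. top), (\<lambda>_. bot))"

definition cbot :: "('b \<Rightarrow> 'l::complete_lattice) \<times> ('a \<Rightarrow> 'l)" where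
  "cbot = ((\<lambda>_. bot), (\<lambda>_. top))"

definition meet_irreducible :: "(nat \<Rightarrow> 'l::complete_lattice \<Rightarrow> 'l \<Rightarrow> 'l) \<Rightarrow> (nat \<Rightarrow> 'l \<Rightarrow> 'l \<Rightarrow> 'l)
    \<Rightarrow> ('a \<Rightarrow> 'b \<Rightarrow> 'l) \<Rightarrow> ('a \<Rightarrow> 'b \<Rightarrow> nat) \<Rightarrow> ('b \<Rightarrow> 'l) \<times> ('a \<Rightarrow> 'l) \<Rightarrow> bool" where
  "meet_irreducible ld rd R \<sigma> c \<longleftrightarrow> c \<in> concepts ld rd R \<sigma> \<and> c \<noteq> ctop \<and>
     (\<forall>d\<in>concepts ld rd R \<sigma>. \<forall>e\<in>concepts ld rd R \<sigma>.
        c = cInf ld rd R \<sigma> {d, e} \<longrightarrow> c = d \<or> c = e)"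

definition phi :: "'a \<Rightarrow> 'l::complete_lattice \<Rightarrow> 'a \<Rightarrow> 'l" where
  "phi a x = (\<lambda>a'. if a' = a then x else bot)"

definition MF :: "(nat \<Rightarrow> 'l::complete_lattice \<Rightarrow> 'l \<Rightarrow> 'l) \<Rightarrow> (nat \<Rightarrow> 'l \<Rightarrow> 'l \<Rightarrow> 'l)
    \<Rightarrow> ('a \<Rightarrow> 'b \<Rightarrow> 'l) \<Rightarrow> ('a \<Rightarrow> 'b \<Rightarrow> nat) \<Rightarrow> 'a set \<Rightarrow> (('b \<Rightarrow> 'l) \<times> ('a \<Rightarrow> 'l)) set" where
  "MF ld rd R \<sigma> A' = {c. meet_irreducible ld rd R \<sigma> c \<and>
      (\<exists>a\<in>A'. \<exists>x. c = (down_op rd R \<sigma> (phi a x), up_op ld R \<sigma> (down_op rd R \<sigma> (phi a x))))}"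

definition Mg :: "(nat \<Rightarrow> 'l::complete_lattice \<Rightarrow> 'l \<Rightarrow> 'l) \<Rightarrow> (nat \<Rightarrow> 'l \<Rightarrow> 'l \<Rightarrow> 'l)
    \<Rightarrow> ('a \<Rightarrow> 'b \<Rightarrow> 'l) \<Rightarrow> ('a \<Rightarrow> 'b \<Rightarrow> nat) \<Rightarrow> 'a set \<Rightarrow> ('b \<Rightarrow> 'l) \<times> ('a \<Rightarrow> 'l)
    \<Rightarrow> (('b \<Rightarrow> 'l) \<times> ('a \<Rightarrow> 'l)) set" where
  "Mg ld rd R \<sigma> A' c = {d \<in> MF ld rd R \<sigma> A'. cle c d}"

definition acc_concepts :: "(nat \<Rightarrow> 'l::complete_lattice \<Rightarrow> 'l \<Rightarrow> 'l) \<Rightarrow> (nat \<Rightarrow> 'l \<Rightarrow> 'l \<Rightarrow> 'l)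
    \<Rightarrow> ('a \<Rightarrow> 'b \<Rightarrow> 'l) \<Rightarrow> ('a \<Rightarrow> 'b \<Rightarrow> nat) \<Rightarrow> bool" where
  "acc_concepts ld rd R \<sigma> \<longleftrightarrow>
     \<not> (\<exists>ch :: nat \<Rightarrow> ('b \<Rightarrow> 'l) \<times> ('a \<Rightarrow> 'l).
          (\<forall>k. ch k \<in> concepts ld rd R \<sigma>) \<and>
          (\<forall>k. cle (ch k) (ch (Suc k)) \<and> ch k \<noteq> ch (Suc k)))"

definition separable :: "('a \<Rightarrow> 'b \<Rightarrow> 'l::complete_lattice) \<Rightarrow> 'a set \<Rightarrow> 'b set \<Rightarrow> bool" where
  "separable R Y X \<longleftrightarrow> Y \<subset> UNIV \<and> X \<subset> UNIV \<and> Y \<noteq> {} \<and> X \<noteq> {} \<and>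
     (\<exists>a\<in>Y. \<exists>b\<in>X. R a b \<noteq> bot) \<and>
     (\<forall>a\<in>Y. \<forall>b. b \<notin> X \<longrightarrow> R a b = bot) \<and>
     (\<forall>a. a \<notin> Y \<longrightarrow> (\<forall>b\<in>X. R a b = bot))"

definition no_zero_divisors :: "('l::complete_lattice \<Rightarrow> 'l \<Rightarrow> 'l) \<Rightarrow> bool" where
  "no_zero_divisors c \<longleftrightarrow> \<not> (\<exists>x y. x \<noteq> bot \<and> y \<noteq> bot \<and> c x y = bot)"

definition independent_decomposition :: "(nat \<Rightarrow> 'l::complete_lattice \<Rightarrow> 'l \<Rightarrow> 'l)
    \<Rightarrow> ('a \<Rightarrow> 'b \<Rightarrow> 'l) \<Rightarrow> ('a \<Rightarrow> 'b \<Rightarrow> nat) \<Rightarrow> 'k set \<Rightarrow> ('k \<Rightarrow> 'a set) \<Rightarrow> ('k \<Rightarrow> 'b set) \<Rightarrow> bool" where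
  "independent_decomposition cj R \<sigma> \<Lambda> AA BB \<longleftrightarrow>
     \<Lambda> \<noteq> {} \<and>
     (\<forall>l\<in>\<Lambda>. separable R (AA l) (BB l)) \<and>
     (\<forall>l\<in>\<Lambda>. \<forall>m\<in>\<Lambda>. l \<noteq> m \<longrightarrow> AA l \<inter> AA m = {}) \<and> (\<Union>l\<in>\<Lambda>. AA l) = UNIV \<and>
     (\<forall>l\<in>\<Lambda>. \<forall>m\<in>\<Lambda>. l \<noteq> m \<longrightarrow> BB l \<inter> BB m = {}) \<and> (\<Union>l\<in>\<Lambda>. BB l) = UNIV \<and>
     (\<forall>l\<in>\<Lambda>. \<forall>a b. ((a \<notin> AA l \<and> b \<in> BB l) \<or> (a \<in> AA l \<and> b \<notin> BB l))
         \<longrightarrow> no_zero_divisors (cj (\<sigma> a b)))"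

definition is_block :: "'c set \<Rightarrow> ('c \<Rightarrow> 'c \<Rightarrow> bool) \<Rightarrow> ('c \<Rightarrow> 'c \<Rightarrow> 'c) \<Rightarrow> ('c \<Rightarrow> 'c \<Rightarrow> 'c)
    \<Rightarrow> 'c \<Rightarrow> 'c \<Rightarrow> 'c set \<Rightarrow> bool" where
  "is_block M le mt jn bt tp K \<longleftrightarrow>
     K \<subset> M \<and> (\<forall>x\<in>K. \<forall>y\<in>K. mt x y \<in> K \<and> jn x y \<in> K) \<and>
     K - {bt, tp} \<noteq> {} \<and>
     (\<forall>k\<in>K - {bt, tp}. ({x\<in>M. le k x} \<union> {x\<in>M. le x k}) - {bt, tp} \<subseteq> K)"

definition is_complete_block :: "'c set \<Rightarrow> ('c \<Rightarrow> 'c \<Rightarrow> bool) \<Rightarrow> ('c \<Rightarrow> 'c \<Rightarrow> 'c) \<Rightarrow> ('c \<Rightarrow> 'c \<Rightarrow> 'c)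
    \<Rightarrow> 'c \<Rightarrow> 'c \<Rightarrow> 'c set \<Rightarrow> bool" where
  "is_complete_block M le mt jn bt tp K \<longleftrightarrow> is_block M le mt jn bt tp K \<and> bt \<in> K \<and> tp \<in> K"

definition Kset :: "(nat \<Rightarrow> 'l::complete_lattice \<Rightarrow> 'l \<Rightarrow> 'l) \<Rightarrow> (nat \<Rightarrow> 'l \<Rightarrow> 'l \<Rightarrow> 'l)
    \<Rightarrow> ('a \<Rightarrow> 'b \<Rightarrow> 'l) \<Rightarrow> ('a \<Rightarrow> 'b \<Rightarrow> nat) \<Rightarrow> 'a set \<Rightarrow> (('b \<Rightarrow> 'l) \<times> ('a \<Rightarrow> 'l)) set" where
  "Kset ld rd R \<sigma> A' =
     {c \<in> concepts ld rd R \<sigma>. c = cInf ld rd R \<sigma> (Mg ld rd R \<sigma> A' c)} \<union> {ctop, cbot}"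

end

theory Submission
  imports Defs
begin

locale ctx =
  fixes cj ld rd :: "nat \<Rightarrow> 'l::complete_lattice \<Rightarrow> 'l \<Rightarrow> 'l"
    and n :: nat
    and R :: "'a \<Rightarrow> 'b \<Rightarrow> 'l"
    and \<sigma> :: "'a \<Rightarrow> 'b \<Rightarrow> nat"
  assumes adj: "\<forall>i\<in>{1..n}. adjoint_triple (cj i) (ld i) (rd i)"
    and topu: "\<forall>i\<in>{1..n}. \<forall>x. cj i x top = x \<and> cj i top x = x"
    and sig: "\<forall>a b. \<sigma> a b \<in> {1..n}"
    and norm: "normalized R"
begin

abbreviation "up \<equiv> up_op ld R \<sigma>"
abbreviation "down \<equiv> down_op rd R \<sigma>"
abbreviation "M \<equiv> concepts ld rd R \<sigma>"

lemma adj1: "cj (\<sigma> a b) x y \<le> z \<longleftrightarrow> x \<le> ld (\<sigma> a b) z y"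
  using adj sig unfolding adjoint_triple_def by metis
lemma adj2: "cj (\<sigma> a b) x y \<le> z \<longleftrightarrow> y \<le> rd (\<sigma> a b) z x"
  using adj sig unfolding adjoint_triple_def by metis
lemma cj_top1: "cj (\<sigma> a b) x top = x" using topu sig by metis
lemma cj_top2: "cj (\<sigma> a b) top y = y" using topu sig by metis
lemma cj_bot1: "cj (\<sigma> a b) bot y = bot"
  using adj1[of a b bot y bot] by (simp add: bot_unique)
lemma cj_bot2: "cj (\<sigma> a b) x bot = bot"
  using adj2[of a b x bot bot] by (simp add: bot_unique)
lemma cj_mono: "x \<le> x' \<Longrightarrow> y \<le> y' \<Longrightarrow> cj (\<sigma> a b) x y \<le> cj (\<sigma> a b) x' y'"
proof -
  assume h: "x \<le> x'" "y \<le> y'"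
  have "cj (\<sigma> a b) x y \<le> cj (\<sigma> a b) x' y"
    using adj1[of a b x' y "cj (\<sigma> a b) x' y"] adj1[of a b x y "cj (\<sigma> a b) x' y"] h order_trans by blast
  also have "\<dots> \<le> cj (\<sigma> a b) x' y'"
    using adj2[of a b x' y' "cj (\<sigma> a b) x' y'"] adj2[of a b x' y "cj (\<sigma> a b) x' y'"] h order_trans by blast
  finally show ?thesis .
qed

lemma galois_down: "g \<le> down f \<longleftrightarrow> (\<forall>a b. cj (\<sigma> a b) (f a) (g b) \<le> R a b)"
  unfolding down_op_def le_fun_def le_INF_iff using adj2 by blast
lemma galois_up: "f \<le> up g \<longleftrightarrow> (\<forall>a b. cj (\<sigma> a b) (f a) (g b) \<le> R a b)"
  unfolding up_op_def le_fun_def le_INF_iff using adj1 by blast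
lemma galois: "g \<le> down f \<longleftrightarrow> f \<le> up g"
  using galois_down galois_up by simp

lemma ext1: "g \<le> down (up g)" using galois[of g "up g"] by simp
lemma ext2: "f \<le> up (down f)" using galois[of "down f" f] by simp
lemma up_anti: "g \<le> g' \<Longrightarrow> up g' \<le> up g"
proof -
  assume h: "g \<le> g'"
  have "g \<le> down (up g')" using h ext1[of g'] by (rule order_trans)
  thus ?thesis using galois[of g "up g'"] by simp
qed
lemma down_anti: "f \<le> f' \<Longrightarrow> down f' \<le> down f"
proof -
  assume h: "f \<le> f'"
  have "f \<le> up (down f')" using h ext2[of f'] by (rule order_trans)
  thus ?thesis using galois[of "down f'" f] by simp
qed
lemma dud: "down (up (down f)) = down f"
  by (simp add: antisym down_anti ext1 ext2)
lemma udu: "up (down (up g)) = up g"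
  by (simp add: antisym up_anti ext1 ext2)

lemma mem_M: "(g, f) \<in> M \<longleftrightarrow> up g = f \<and> down f = g"
  by (simp add: concepts_def)
lemma M_snd: "c \<in> M \<Longrightarrow> snd c = up (fst c)"
  by (cases c) (simp add: mem_M)
lemma M_fst: "c \<in> M \<Longrightarrow> fst c = down (snd c)"
  by (cases c) (simp add: mem_M)
lemma conc_eq: "c \<in> M \<Longrightarrow> d \<in> M \<Longrightarrow> fst c = fst d \<Longrightarrow> c = d"
  by (metis M_snd prod.collapse)
lemma mkc: "down (up g) = g \<Longrightarrow> (g, up g) \<in> M"
  by (simp add: mem_M)
lemma cle_antisym: "c \<in> M \<Longrightarrow> d \<in> M \<Longrightarrow> cle c d \<Longrightarrow> cle d c \<Longrightarrow> c = d"
  unfolding cle_def using conc_eq antisym by blast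

lemma cInf_eq:
  assumes S: "S \<subseteq> M"
  shows "cInf ld rd R \<sigma> S = ((INF d\<in>S. fst d), up (INF d\<in>S. fst d))"
proof -
  define g0 where "g0 = (INF d\<in>S. fst d)"
  have lb: "g0 \<le> fst d" if "d \<in> S" for d unfolding g0_def using that by (rule INF_lower)
  have gr: "h \<le> g0" if "\<forall>d\<in>S. h \<le> fst d" for h unfolding g0_def using that by (simp add: INF_greatest)
  have cl: "down (up g0) = g0"
  proof (rule antisym)
    show "g0 \<le> down (up g0)" by (rule ext1)
    have "down (up g0) \<le> fst d" if "d \<in> S" for d
    proof -
      have "down (up g0) \<le> down (up (fst d))" by (intro down_anti up_anti lb that)
      also have "\<dots> = fst d" using S that M_snd M_fst by (metis subsetD)
      finally show ?thesis .
    qed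
    thus "down (up g0) \<le> g0" using gr by blast
  qed
  have inM: "(g0, up g0) \<in> M" using mkc[OF cl] .
  have P: "(g0, up g0) \<in> M \<and> (\<forall>d\<in>S. cle (g0, up g0) d) \<and>
      (\<forall>e\<in>M. (\<forall>d\<in>S. cle e d) \<longrightarrow> cle e (g0, up g0))"
    using inM lb gr unfolding cle_def by simp
  show ?thesis unfolding cInf_def g0_def[symmetric]
  proof (rule the_equality)
    show "(g0, up g0) \<in> M \<and> (\<forall>d\<in>S. cle (g0, up g0) d) \<and>
      (\<forall>e\<in>M. (\<forall>d\<in>S. cle e d) \<longrightarrow> cle e (g0, up g0))" by (rule P)
    fix x assume x: "x \<in> M \<and> (\<forall>d\<in>S. cle x d) \<and> (\<forall>e\<in>M. (\<forall>d\<in>S. cle e d) \<longrightarrow> cle e x)"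
    have "cle x (g0, up g0)" using x gr unfolding cle_def by simp
    moreover have "cle (g0, up g0) x" using x P by blast
    ultimately show "x = (g0, up g0)" using cle_antisym x inM by blast
  qed
qed

lemma cSup_eq:
  assumes S: "S \<subseteq> M"
  shows "cSup ld rd R \<sigma> S = (down (up (SUP d\<in>S. fst d)), up (SUP d\<in>S. fst d))"
proof -
  define g0 where "g0 = (SUP d\<in>S. fst d)"
  have inM: "(down (up g0), up g0) \<in> M" using mkc[of "down (up g0)"] by (simp add: udu dud)
  have ub: "cle d (down (up g0), up g0)" if "d \<in> S" for d
  proof -
    have "fst d \<le> g0" unfolding g0_def using that by (rule SUP_upper)
    also have "g0 \<le> down (up g0)" by (rule ext1)
    finally show ?thesis unfolding cle_def by simp
  qed
  have lst: "cle (down (up g0), up g0) e" if "e \<in> M" "\<forall>d\<in>S. cle d e" for e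
  proof -
    have "g0 \<le> fst e" using that(2) unfolding g0_def cle_def by (simp add: SUP_least)
    hence "down (up g0) \<le> down (up (fst e))" by (intro down_anti up_anti)
    also have "\<dots> = fst e" using that M_snd M_fst by metis
    finally show ?thesis unfolding cle_def by simp
  qed
  show ?thesis unfolding cSup_def g0_def[symmetric]
  proof (rule the_equality)
    show "(down (up g0), up g0) \<in> M \<and> (\<forall>d\<in>S. cle d (down (up g0), up g0)) \<and>
      (\<forall>e\<in>M. (\<forall>d\<in>S. cle d e) \<longrightarrow> cle (down (up g0), up g0) e)"
      using inM ub lst by blast
    fix x assume x: "x \<in> M \<and> (\<forall>d\<in>S. cle d x) \<and> (\<forall>e\<in>M. (\<forall>d\<in>S. cle d e) \<longrightarrow> cle x e)"
    have "cle x (down (up g0), up g0)" using x inM ub by blast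
    moreover have "cle (down (up g0), up g0) x" using x lst by blast
    ultimately show "x = (down (up g0), up g0)" using x inM cle_antisym by blast
  qed
qed

lemma bot_ne_top: "(bot::'l) \<noteq> top"
proof
  assume h: "(bot::'l) = top"
  obtain b1 where "R undefined b1 \<noteq> bot" using norm unfolding normalized_def by blast
  moreover have "R undefined b1 \<le> bot" using h by simp
  ultimately show False by (simp add: bot_unique)
qed

lemma up_top: "up (\<lambda>_. top) = (\<lambda>_. bot)"
proof
  fix a
  have h: "\<forall>a b. cj (\<sigma> a b) (up (\<lambda>_. top) a) top \<le> R a b"
    using galois_up[of "up (\<lambda>_. top)" "\<lambda>_. top"] by simp
  obtain b2 where "R a b2 = bot" using norm unfolding normalized_def by blast
  moreover have "up (\<lambda>_. top) a \<le> R a b2" using h[rule_format, of a b2] by (simp add: cj_top1)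
  ultimately show "up (\<lambda>_. top) a = bot" by (simp add: bot_unique)
qed
lemma down_bot: "down (\<lambda>_. bot) = (\<lambda>_. top)"
proof -
  have "(\<lambda>_. top) \<le> down (\<lambda>_. bot)" unfolding galois_down by (simp add: cj_bot1)
  thus ?thesis by (intro ext) (simp add: le_fun_def top_unique)
qed
lemma up_bot: "up (\<lambda>_. bot) = (\<lambda>_. top)"
proof -
  have "(\<lambda>_. top) \<le> up (\<lambda>_. bot)" unfolding galois_up by (simp add: cj_bot2)
  thus ?thesis by (intro ext) (simp add: le_fun_def top_unique)
qed
lemma down_top: "down (\<lambda>_. top) = (\<lambda>_. bot)"
proof
  fix b
  have h: "\<forall>a b. cj (\<sigma> a b) top (down (\<lambda>_. top) b) \<le> R a b"
    using galois_down[of "down (\<lambda>_. top)" "\<lambda>_. top"] by simp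
  obtain a2 where "R a2 b = bot" using norm unfolding normalized_def by blast
  moreover have "down (\<lambda>_. top) b \<le> R a2 b" using h[rule_format, of a2 b] by (simp add: cj_top2)
  ultimately show "down (\<lambda>_. top) b = bot" by (simp add: bot_unique)
qed

lemma ctop_M: "ctop \<in> M" unfolding ctop_def mem_M by (simp add: up_top down_bot)
lemma cbot_M: "cbot \<in> M" unfolding cbot_def mem_M by (simp add: up_bot down_top)
lemma ctop_ne_cbot: "(ctop :: ('b \<Rightarrow> 'l) \<times> ('a \<Rightarrow> 'l)) \<noteq> cbot"
proof
  assume h: "(ctop :: ('b \<Rightarrow> 'l) \<times> ('a \<Rightarrow> 'l)) = cbot"
  have "fst (ctop :: ('b \<Rightarrow> 'l) \<times> ('a \<Rightarrow> 'l)) undefined = fst (cbot :: ('b \<Rightarrow> 'l) \<times> ('a \<Rightarrow> 'l)) undefined"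
    using h by simp
  thus False using bot_ne_top by (simp add: ctop_def cbot_def)
qed
lemma ctop_max: "cle c ctop" unfolding cle_def ctop_def by (simp add: le_fun_def)
lemma cbot_min: "cle cbot c" unfolding cle_def cbot_def by (simp add: le_fun_def)
lemma cle_trans: "cle x y \<Longrightarrow> cle y z \<Longrightarrow> cle x z" unfolding cle_def by auto

lemma inf2: assumes "x \<in> M" "y \<in> M" "cle x y" shows "cInf ld rd R \<sigma> {x, y} = x"
proof -
  have e: "(INF d\<in>{x, y}. fst d) = fst x" using assms(3) unfolding cle_def by (simp add: inf_absorb1)
  have "cInf ld rd R \<sigma> {x, y} = (fst x, up (fst x))" using cInf_eq[of "{x, y}"] assms(1,2) e by simp
  also have "\<dots> = x" using M_snd[OF assms(1)] by (metis prod.collapse)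
  finally show ?thesis .
qed
lemma sup2: assumes "x \<in> M" "y \<in> M" "cle x y" shows "cSup ld rd R \<sigma> {x, y} = y"
proof -
  have e: "(SUP d\<in>{x, y}. fst d) = fst y" using assms(3) unfolding cle_def by (simp add: sup_absorb2)
  have "cSup ld rd R \<sigma> {x, y} = (down (up (fst y)), up (fst y))" using cSup_eq[of "{x, y}"] assms(1,2) e by simp
  also have "\<dots> = y" using M_snd[OF assms(2)] M_fst[OF assms(2)] by (metis prod.collapse)
  finally show ?thesis .
qed

definition phic where "phic a x = (down (phi a x), up (down (phi a x)))"

lemma phic_M: "phic a x \<in> M" unfolding phic_def mem_M by (simp add: dud)

lemma fst_decomp: assumes c: "c \<in> M" shows "fst c = (INF a. fst (phic a (snd c a)))"
proof (rule antisym)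
  show "fst c \<le> (INF a. fst (phic a (snd c a)))"
  proof (rule INF_greatest)
    fix a
    have "phi a (snd c a) \<le> snd c" unfolding phi_def le_fun_def by simp
    hence "down (snd c) \<le> down (phi a (snd c a))" by (rule down_anti)
    thus "fst c \<le> fst (phic a (snd c a))" using M_fst[OF c] unfolding phic_def by simp
  qed
  have "(INF a. fst (phic a (snd c a))) \<le> down (snd c)"
    unfolding galois_down
  proof (intro allI)
    fix a b
    have "cj (\<sigma> a b) (phi a (snd c a) a) (down (phi a (snd c a)) b) \<le> R a b"
      using galois_down[of "down (phi a (snd c a))" "phi a (snd c a)"] by simp
    hence h: "cj (\<sigma> a b) (snd c a) (down (phi a (snd c a)) b) \<le> R a b" unfolding phi_def by simp
    have "(INF a. fst (phic a (snd c a))) b \<le> down (phi a (snd c a)) b"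
      unfolding phic_def fst_conv INF_apply by (rule INF_lower) simp
    hence "cj (\<sigma> a b) (snd c a) ((INF a. fst (phic a (snd c a))) b)
        \<le> cj (\<sigma> a b) (snd c a) (down (phi a (snd c a)) b)" by (intro cj_mono order_refl)
    thus "cj (\<sigma> a b) (snd c a) ((INF a. fst (phic a (snd c a))) b) \<le> R a b" using h by (rule order_trans)
  qed
  thus "(INF a. fst (phic a (snd c a))) \<le> fst c" using M_fst[OF c] by simp
qed

lemma phic_bot: "phic a bot = ctop"
proof -
  have e: "phi a bot = (\<lambda>_. bot)" unfolding phi_def by auto
  show ?thesis unfolding phic_def ctop_def e by (simp add: down_bot up_top)
qed

lemma phic_top_lb: "R a b \<le> fst (phic a top) b"
proof -
  have "(\<lambda>b. R a b) \<le> down (phi a top)" unfolding galois_down phi_def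
    by (auto simp: cj_top2 cj_bot1)
  thus ?thesis unfolding phic_def le_fun_def by simp
qed
lemma phic_top_ub: "fst (phic a top) b \<le> R a b"
proof -
  have "cj (\<sigma> a b) (phi a top a) (down (phi a top) b) \<le> R a b"
    using galois_down[of "down (phi a top)" "phi a top"] by simp
  thus ?thesis unfolding phic_def phi_def by (simp add: cj_top2)
qed

lemma phic_zero: assumes "x \<noteq> bot" "no_zero_divisors (cj (\<sigma> a b))" "R a b = bot"
  shows "fst (phic a x) b = bot"
proof -
  have "cj (\<sigma> a b) (phi a x a) (down (phi a x) b) \<le> R a b"
    using galois_down[of "down (phi a x)" "phi a x"] by simp
  hence "cj (\<sigma> a b) x (down (phi a x) b) = bot" using assms(3) unfolding phi_def by (simp add: bot_unique)
  thus ?thesis using assms(1,2) unfolding no_zero_divisors_def phic_def by auto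
qed

lemma conc_zero: assumes "c \<in> M" "no_zero_divisors (cj (\<sigma> a b))" "R a b = bot"
  shows "snd c a = bot \<or> fst c b = bot"
proof -
  have "fst c \<le> down (snd c)" using M_fst[OF assms(1)] by simp
  hence "cj (\<sigma> a b) (snd c a) (fst c b) \<le> R a b" unfolding galois_down by blast
  hence "cj (\<sigma> a b) (snd c a) (fst c b) = bot" using assms(3) by (simp add: bot_unique)
  thus ?thesis using assms(2) unfolding no_zero_divisors_def by auto
qed

lemma fst_bot_cbot: "c \<in> M \<Longrightarrow> fst c = (\<lambda>_. bot) \<Longrightarrow> c = cbot"
  using conc_eq cbot_M unfolding cbot_def by simp
lemma snd_bot_ctop: "c \<in> M \<Longrightarrow> snd c = (\<lambda>_. bot) \<Longrightarrow> c = ctop"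
  using conc_eq ctop_M M_fst unfolding ctop_def by (simp add: down_bot)

lemma cInf_M: assumes S: "S \<subseteq> M" shows "cInf ld rd R \<sigma> S \<in> M"
proof -
  define g0 where "g0 = (INF d\<in>S. fst d)"
  have cl: "down (up g0) = g0"
  proof (rule antisym)
    show "g0 \<le> down (up g0)" by (rule ext1)
    have "down (up g0) \<le> fst d" if "d \<in> S" for d
    proof -
      have "g0 \<le> fst d" unfolding g0_def using that by (rule INF_lower)
      hence "down (up g0) \<le> down (up (fst d))" by (intro down_anti up_anti)
      also have "\<dots> = fst d" using S that M_snd M_fst by (metis subsetD)
      finally show ?thesis .
    qed
    thus "down (up g0) \<le> g0" unfolding g0_def by (simp add: INF_greatest)
  qed
  show ?thesis using cInf_eq[OF S] mkc[OF cl] unfolding g0_def by simp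
qed

lemma cSup_M: assumes S: "S \<subseteq> M" shows "cSup ld rd R \<sigma> S \<in> M"
  using cSup_eq[OF S] mkc[of "down (up (SUP d\<in>S. fst d))"] by (simp add: udu dud)

lemma cSup_ge: assumes S: "S \<subseteq> M" "x \<in> S" shows "fst x \<le> fst (cSup ld rd R \<sigma> S)"
proof -
  have "fst x \<le> (SUP d\<in>S. fst d)" using S(2) by (rule SUP_upper)
  also have "\<dots> \<le> down (up (SUP d\<in>S. fst d))" by (rule ext1)
  finally show ?thesis using cSup_eq[OF S(1)] by simp
qed

lemma cInf_le: assumes S: "S \<subseteq> M" "x \<in> S" shows "fst (cInf ld rd R \<sigma> S) \<le> fst x"
  using cInf_eq[OF S(1)] S(2) by (simp add: INF_lower)

lemma cInf_empty: "cInf ld rd R \<sigma> {} = ctop"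
  using cInf_eq[of "{}"] by (simp add: ctop_def up_top top_fun_def)

end

locale dctx = ctx cj ld rd n R \<sigma>
  for cj ld rd :: "nat \<Rightarrow> 'l::complete_lattice \<Rightarrow> 'l \<Rightarrow> 'l"
    and n :: nat
    and R :: "'a \<Rightarrow> 'b \<Rightarrow> 'l"
    and \<sigma> :: "'a \<Rightarrow> 'b \<Rightarrow> nat" +
  fixes \<Lambda> :: "'k set" and AA :: "'k \<Rightarrow> 'a set" and BB :: "'k \<Rightarrow> 'b set" and l :: 'k
  assumes acc: "acc_concepts ld rd R \<sigma>"
    and dec: "independent_decomposition cj R \<sigma> \<Lambda> AA BB"
    and lin: "l \<in> \<Lambda>"
begin

lemma sep: "\<mu> \<in> \<Lambda> \<Longrightarrow> separable R (AA \<mu>) (BB \<mu>)"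
  using dec unfolding independent_decomposition_def by blast
lemma disjB: "\<mu> \<in> \<Lambda> \<Longrightarrow> \<nu> \<in> \<Lambda> \<Longrightarrow> b \<in> BB \<mu> \<Longrightarrow> b \<in> BB \<nu> \<Longrightarrow> \<mu> = \<nu>"
  using dec unfolding independent_decomposition_def by blast
lemma coverA: "\<exists>\<mu>\<in>\<Lambda>. a \<in> AA \<mu>"
proof -
  have "a \<in> (\<Union>l\<in>\<Lambda>. AA l)" using dec unfolding independent_decomposition_def by simp
  thus ?thesis by blast
qed
lemma coverB: "\<exists>\<mu>\<in>\<Lambda>. b \<in> BB \<mu>"
proof -
  have "b \<in> (\<Union>l\<in>\<Lambda>. BB l)" using dec unfolding independent_decomposition_def by simp
  thus ?thesis by blast
qed
lemma R_off1: "\<mu> \<in> \<Lambda> \<Longrightarrow> a \<in> AA \<mu> \<Longrightarrow> b \<notin> BB \<mu> \<Longrightarrow> R a b = bot"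
  using sep unfolding separable_def by blast
lemma nzd1: "\<mu> \<in> \<Lambda> \<Longrightarrow> a \<in> AA \<mu> \<Longrightarrow> b \<notin> BB \<mu> \<Longrightarrow> no_zero_divisors (cj (\<sigma> a b))"
  using dec unfolding independent_decomposition_def by blast

definition inblk where
  "inblk \<mu> c \<longleftrightarrow> \<mu> \<in> \<Lambda> \<and> c \<in> M \<and> c \<noteq> ctop \<and> c \<noteq> cbot \<and> (\<exists>b\<in>BB \<mu>. fst c b \<noteq> bot)"

lemma supp: assumes "inblk \<mu> c" "fst c b \<noteq> bot" shows "b \<in> BB \<mu>"
proof -
  have cM: "c \<in> M" and nt: "c \<noteq> ctop" and mu: "\<mu> \<in> \<Lambda>" using assms(1) unfolding inblk_def by auto
  obtain b0 where b0: "b0 \<in> BB \<mu>" "fst c b0 \<noteq> bot" using assms(1) unfolding inblk_def by auto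
  have "snd c \<noteq> (\<lambda>_. bot)" using snd_bot_ctop cM nt by blast
  then obtain a where a: "snd c a \<noteq> bot" by auto
  obtain \<nu> where nu: "\<nu> \<in> \<Lambda>" "a \<in> AA \<nu>" using coverA by blast
  have key: "b' \<in> BB \<nu>" if "fst c b' \<noteq> bot" for b'
  proof (rule ccontr)
    assume "b' \<notin> BB \<nu>"
    hence "snd c a = bot \<or> fst c b' = bot"
      using conc_zero[OF cM nzd1[OF nu _] R_off1[OF nu]] by blast
    thus False using a that by blast
  qed
  have "\<mu> = \<nu>" using disjB[OF mu nu(1) b0(1) key[OF b0(2)]] .
  thus ?thesis using key[OF assms(2)] by simp
qed

lemma every: assumes "c \<in> M" "c \<noteq> ctop" "c \<noteq> cbot" shows "\<exists>\<mu>. inblk \<mu> c"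
proof -
  have "fst c \<noteq> (\<lambda>_. bot)" using fst_bot_cbot assms by blast
  then obtain b where b: "fst c b \<noteq> bot" by auto
  obtain \<mu> where "\<mu> \<in> \<Lambda>" "b \<in> BB \<mu>" using coverB by blast
  thus ?thesis using assms b unfolding inblk_def by blast
qed

lemma uniq: assumes "inblk \<mu> c" "inblk \<nu> c" shows "\<mu> = \<nu>"
proof -
  obtain b where b: "b \<in> BB \<mu>" "fst c b \<noteq> bot" using assms(1) unfolding inblk_def by auto
  have "b \<in> BB \<nu>" using supp[OF assms(2) b(2)] .
  thus ?thesis using disjB b(1) assms unfolding inblk_def by blast
qed

definition "rel = {(d, c). c \<in> M \<and> d \<in> M \<and> cle c d \<and> c \<noteq> d}"

lemma wfr: "wf rel"
proof -
  have "\<not> (\<exists>f. \<forall>i. (f (Suc i), f i) \<in> rel)"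
  proof
    assume "\<exists>f. \<forall>i. (f (Suc i), f i) \<in> rel"
    then obtain f where f: "\<forall>i. (f (Suc i), f i) \<in> rel" by blast
    hence "(\<forall>k. f k \<in> M) \<and> (\<forall>k. cle (f k) (f (Suc k)) \<and> f k \<noteq> f (Suc k))"
      unfolding rel_def by auto
    thus False using acc unfolding acc_concepts_def by blast
  qed
  thus ?thesis using wf_iff_no_infinite_down_chain by blast
qed

definition "SS c = {d. meet_irreducible ld rd R \<sigma> d \<and> (\<exists>a x. d = phic a x) \<and> cle c d}"

lemma SS_M: "SS c \<subseteq> M" unfolding SS_def meet_irreducible_def by auto

lemma SS_mono: "cle c d \<Longrightarrow> SS d \<subseteq> SS c"
  unfolding SS_def using cle_trans by blast

lemma repr: "c \<in> M \<Longrightarrow> c = cInf ld rd R \<sigma> (SS c)"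
proof (induction c rule: wf_induct[OF wfr])
  case (1 c)
  note IH = "1.IH" and cM = "1.prems"
  define I where "I = cInf ld rd R \<sigma> (SS c)"
  have IM: "I \<in> M" unfolding I_def using cInf_M SS_M by blast
  have fI: "fst I = (INF d\<in>SS c. fst d)" unfolding I_def using cInf_eq[OF SS_M] by simp
  have sub: "fst I \<le> fst d" if "d \<in> M" "cle c d" "c \<noteq> d" for d
  proof -
    have "(d, c) \<in> rel" unfolding rel_def using that cM by auto
    hence "d = cInf ld rd R \<sigma> (SS d)" using IH that by blast
    hence "fst d = (INF x\<in>SS d. fst x)" using cInf_eq[OF SS_M] by (metis fst_conv)
    moreover have "(INF x\<in>SS c. fst x) \<le> (INF x\<in>SS d. fst x)"
      by (rule INF_superset_mono[OF SS_mono[OF that(2)]]) simp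
    ultimately show ?thesis using fI by simp
  qed
  have le1: "fst c \<le> fst I" unfolding fI SS_def cle_def by (rule INF_greatest) simp
  have le2: "fst I \<le> fst c"
  proof (cases "c = ctop")
    case True
    thus ?thesis by (simp add: ctop_def le_fun_def)
  next
    case nt: False
    show ?thesis
    proof (cases "meet_irreducible ld rd R \<sigma> c")
      case False
      then obtain d e where de: "d \<in> M" "e \<in> M" "c = cInf ld rd R \<sigma> {d, e}" "c \<noteq> d" "c \<noteq> e"
        using cM nt unfolding meet_irreducible_def by blast
      have fc: "fst c = inf (fst d) (fst e)" using de(3) cInf_eq[of "{d, e}"] de(1,2) by simp
      have "cle c d" "cle c e" using fc unfolding cle_def by simp_all
      hence "fst I \<le> fst d" "fst I \<le> fst e" using sub de by blast+
      thus ?thesis using fc by simp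
    next
      case mi: True
      have "fst I \<le> fst (phic a (snd c a))" for a
      proof -
        have pM: "phic a (snd c a) \<in> M" by (rule phic_M)
        have cp: "cle c (phic a (snd c a))" unfolding cle_def fst_decomp[OF cM]
          by (rule INF_lower) simp
        show ?thesis
        proof (cases "c = phic a (snd c a)")
          case True
          hence "c \<in> SS c" using mi unfolding SS_def cle_def by auto
          hence "fst I \<le> fst c" unfolding fI by (rule INF_lower)
          thus ?thesis using True by simp
        next
          case False
          thus ?thesis using sub pM cp by blast
        qed
      qed
      hence "fst I \<le> (INF a. fst (phic a (snd c a)))" by (simp add: INF_greatest)
      thus ?thesis using fst_decomp[OF cM] by simp
    qed
  qed
  have "fst c = fst I" using le1 le2 by (rule antisym)
  thus ?case using conc_eq[OF cM IM] unfolding I_def by simp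
qed


lemma key: assumes "meet_irreducible ld rd R \<sigma> (phic a x)" "\<nu> \<in> \<Lambda>" "a \<in> AA \<nu>"
    "fst (phic a x) b \<noteq> bot" shows "b \<in> BB \<nu>"
proof (rule ccontr)
  assume nb: "b \<notin> BB \<nu>"
  have "x \<noteq> bot" using assms(1) phic_bot unfolding meet_irreducible_def by metis
  hence "fst (phic a x) b = bot" using phic_zero nzd1[OF assms(2,3) nb] R_off1[OF assms(2,3) nb] by blast
  thus False using assms(4) by simp
qed

lemma Mg_eq: assumes "inblk l c" shows "Mg ld rd R \<sigma> (AA l) c = SS c"
proof
  show "Mg ld rd R \<sigma> (AA l) c \<subseteq> SS c"
    unfolding Mg_def MF_def SS_def phic_def by blast
  show "SS c \<subseteq> Mg ld rd R \<sigma> (AA l) c"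
  proof
    fix d assume d: "d \<in> SS c"
    then obtain a x where dd: "d = phic a x" and mi: "meet_irreducible ld rd R \<sigma> d" and cd: "cle c d"
      unfolding SS_def by blast
    obtain b where b: "b \<in> BB l" "fst c b \<noteq> bot" using assms unfolding inblk_def by auto
    have "fst c b \<le> fst d b" using cd unfolding cle_def le_fun_def by blast
    hence db: "fst d b \<noteq> bot" using b(2) bot_unique by metis
    obtain \<nu> where nu: "\<nu> \<in> \<Lambda>" "a \<in> AA \<nu>" using coverA by blast
    have "b \<in> BB \<nu>" using key[OF mi[unfolded dd] nu] db dd by simp
    hence "\<nu> = l" using disjB[OF nu(1) lin] b(1) by blast
    hence "a \<in> AA l" using nu by simp
    thus "d \<in> Mg ld rd R \<sigma> (AA l) c" using mi cd dd unfolding Mg_def MF_def phic_def by blast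
  qed
qed

lemma Mg_empty: assumes "inblk \<mu> c" "\<mu> \<noteq> l" shows "Mg ld rd R \<sigma> (AA l) c = {}"
proof (rule ccontr)
  assume "Mg ld rd R \<sigma> (AA l) c \<noteq> {}"
  then obtain d where "d \<in> Mg ld rd R \<sigma> (AA l) c" by blast
  then obtain a x where dd: "d = phic a x" and mi: "meet_irreducible ld rd R \<sigma> d" and cd: "cle c d"
    and a: "a \<in> AA l"
    unfolding Mg_def MF_def phic_def by blast
  obtain b where b: "b \<in> BB \<mu>" "fst c b \<noteq> bot" and mu: "\<mu> \<in> \<Lambda>" using assms unfolding inblk_def by auto
  have "fst c b \<le> fst d b" using cd unfolding cle_def le_fun_def by blast
  hence db: "fst d b \<noteq> bot" using b(2) bot_unique by metis
  have "b \<in> BB l" using key[OF mi[unfolded dd] lin a] db dd by simp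
  hence "\<mu> = l" using disjB[OF mu lin] b(1) by blast
  thus False using assms(2) by simp
qed

lemma K_char: "Kset ld rd R \<sigma> (AA l) = {c. inblk l c} \<union> {ctop, cbot}"
proof
  show "{c. inblk l c} \<union> {ctop, cbot} \<subseteq> Kset ld rd R \<sigma> (AA l)"
  proof
    fix c assume c: "c \<in> {c. inblk l c} \<union> {ctop, cbot}"
    show "c \<in> Kset ld rd R \<sigma> (AA l)"
    proof (cases "inblk l c")
      case True
      hence "c \<in> M" unfolding inblk_def by simp
      hence "c = cInf ld rd R \<sigma> (Mg ld rd R \<sigma> (AA l) c)" using repr Mg_eq[OF True] by simp
      thus ?thesis unfolding Kset_def using \<open>c \<in> M\<close> by blast
    next
      case False
      thus ?thesis using c unfolding Kset_def by blast
    qed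
  qed
  show "Kset ld rd R \<sigma> (AA l) \<subseteq> {c. inblk l c} \<union> {ctop, cbot}"
  proof
    fix c assume c: "c \<in> Kset ld rd R \<sigma> (AA l)"
    show "c \<in> {c. inblk l c} \<union> {ctop, cbot}"
    proof (cases "c = ctop \<or> c = cbot")
      case True thus ?thesis by blast
    next
      case False
      hence cM: "c \<in> M" and ceq: "c = cInf ld rd R \<sigma> (Mg ld rd R \<sigma> (AA l) c)"
        using c unfolding Kset_def by auto
      obtain \<mu> where mu: "inblk \<mu> c" using every cM False by blast
      show ?thesis
      proof (cases "\<mu> = l")
        case True thus ?thesis using mu by simp
      next
        case nl: False
        have "c = ctop" using ceq Mg_empty[OF mu nl] cInf_empty by simp
        thus ?thesis by simp
      qed
    qed
  qed
qed

lemma exists_blk: assumes "\<mu> \<in> \<Lambda>" shows "\<exists>c. inblk \<mu> c"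
proof -
  obtain a b where ab: "a \<in> AA \<mu>" "b \<in> BB \<mu>" "R a b \<noteq> bot" using sep[OF assms] unfolding separable_def by blast
  obtain b2 where b2: "R a b2 = bot" using norm unfolding normalized_def by blast
  define c where "c = phic a top"
  have cb: "fst c b \<noteq> bot" using phic_top_lb[of a b] ab(3) unfolding c_def by (metis bot_unique)
  have cb2: "fst c b2 = bot" using phic_top_ub[of a b2] b2 unfolding c_def by (simp add: bot_unique)
  have "c \<noteq> ctop" using cb2 bot_ne_top unfolding ctop_def by auto
  moreover have "c \<noteq> cbot" using cb unfolding cbot_def by auto
  ultimately have "inblk \<mu> c" using assms ab(2) cb phic_M unfolding inblk_def c_def by blast
  thus ?thesis by blast
qed

lemma other_idx: "\<exists>\<mu>\<in>\<Lambda>. \<mu> \<noteq> l"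
proof -
  have "AA l \<subset> UNIV" using sep[OF lin] unfolding separable_def by blast
  then obtain a where "a \<notin> AA l" by blast
  obtain \<mu> where m: "\<mu> \<in> \<Lambda>" "a \<in> AA \<mu>" using coverA by blast
  have "\<mu> \<noteq> l" using m(2) \<open>a \<notin> AA l\<close> by auto
  thus ?thesis using m(1) by blast
qed

lemma block: "is_complete_block M cle
           (\<lambda>c d. cInf ld rd R \<sigma> {c, d}) (\<lambda>c d. cSup ld rd R \<sigma> {c, d})
           cbot ctop (Kset ld rd R \<sigma> (AA l))"
proof -
  define K where "K = {c. inblk l c} \<union> {ctop, cbot}"
  have KM: "K \<subseteq> M" unfolding K_def inblk_def using ctop_M cbot_M by blast
  obtain \<mu> where mu: "\<mu> \<in> \<Lambda>" "\<mu> \<noteq> l" using other_idx by blast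
  obtain c0 where c0: "inblk \<mu> c0" using exists_blk[OF mu(1)] by blast
  have "c0 \<notin> K" using c0 uniq mu(2) unfolding K_def inblk_def by blast
  moreover have "c0 \<in> M" using c0 unfolding inblk_def by simp
  ultimately have proper: "K \<subset> M" using KM by blast
  have ne: "K - {cbot, ctop} \<noteq> {}"
  proof -
    obtain c1 where "inblk l c1" using exists_blk[OF lin] by blast
    hence "c1 \<in> K - {cbot, ctop}" unfolding K_def inblk_def by blast
    thus ?thesis by blast
  qed
  have up_cl: "inblk l x" if "inblk l k" "x \<in> M" "cle k x" "x \<noteq> cbot" "x \<noteq> ctop" for k x
  proof -
    have "\<exists>b\<in>BB l. fst k b \<noteq> bot" using that(1) unfolding inblk_def by blast
    then obtain b where b: "b \<in> BB l" "fst k b \<noteq> bot" by blast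
    have "fst k b \<le> fst x b" using that(3) unfolding cle_def le_fun_def by blast
    hence "fst x b \<noteq> bot" using b(2) bot_unique by metis
    thus ?thesis using b(1) that lin unfolding inblk_def by blast
  qed
  have down_cl: "inblk l x" if H: "inblk l k" "x \<in> M" "cle x k" "x \<noteq> cbot" "x \<noteq> ctop" for k x
  proof -
    obtain \<nu> where nu: "inblk \<nu> x" using every H by blast
    obtain b where b: "b \<in> BB \<nu>" "fst x b \<noteq> bot" using nu unfolding inblk_def by auto
    have "fst x b \<le> fst k b" using H(3) unfolding cle_def le_fun_def by blast
    hence "fst k b \<noteq> bot" using b(2) bot_unique by metis
    hence "b \<in> BB l" using supp[OF H(1)] by blast
    thus ?thesis using b(2) H lin unfolding inblk_def by blast
  qed
  have meet: "cInf ld rd R \<sigma> {x, y} \<in> K" if "x \<in> K" "y \<in> K" for x y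
  proof -
    have xM: "x \<in> M" and yM: "y \<in> M" using that KM by blast+
    have m: "cInf ld rd R \<sigma> {x, y} \<in> M" using cInf_M xM yM by simp
    have lx: "cle (cInf ld rd R \<sigma> {x, y}) x" using cInf_le[of "{x, y}" x] xM yM unfolding cle_def by simp
    show ?thesis
    proof (cases "cInf ld rd R \<sigma> {x, y} = cbot \<or> cInf ld rd R \<sigma> {x, y} = ctop")
      case True thus ?thesis unfolding K_def by blast
    next
      case False
      show ?thesis
      proof (cases "x = ctop \<or> x = cbot")
        case xt: True
        show ?thesis
        proof (cases "x = ctop")
          case True
          have "cInf ld rd R \<sigma> {x, y} = cInf ld rd R \<sigma> {y, x}" by (simp add: insert_commute)
          also have "\<dots> = y" using inf2[OF yM xM] True ctop_max[of y] by simp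
          finally show ?thesis using that by simp
        next
          case False
          hence "x = cbot" using xt by simp
          hence "cInf ld rd R \<sigma> {x, y} = x" using inf2[OF xM yM] cbot_min[of y] by simp
          thus ?thesis using that by simp
        qed
      next
        case xn: False
        hence "inblk l x" using that unfolding K_def by blast
        hence "inblk l (cInf ld rd R \<sigma> {x, y})" using down_cl m lx False by blast
        thus ?thesis unfolding K_def by blast
      qed
    qed
  qed
  have join: "cSup ld rd R \<sigma> {x, y} \<in> K" if "x \<in> K" "y \<in> K" for x y
  proof -
    have xM: "x \<in> M" and yM: "y \<in> M" using that KM by blast+
    have m: "cSup ld rd R \<sigma> {x, y} \<in> M" using cSup_M xM yM by simp
    have lx: "cle x (cSup ld rd R \<sigma> {x, y})" using cSup_ge[of "{x, y}" x] xM yM unfolding cle_def by simp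
    show ?thesis
    proof (cases "cSup ld rd R \<sigma> {x, y} = cbot \<or> cSup ld rd R \<sigma> {x, y} = ctop")
      case True thus ?thesis unfolding K_def by blast
    next
      case False
      show ?thesis
      proof (cases "x = ctop \<or> x = cbot")
        case xt: True
        show ?thesis
        proof (cases "x = ctop")
          case True
          have "cSup ld rd R \<sigma> {x, y} = cSup ld rd R \<sigma> {y, x}" by (simp add: insert_commute)
          also have "\<dots> = x" using sup2[OF yM xM] True ctop_max[of y] by simp
          finally show ?thesis using that by simp
        next
          case False
          hence "x = cbot" using xt by simp
          hence "cSup ld rd R \<sigma> {x, y} = y" using sup2[OF xM yM] cbot_min[of y] by simp
          thus ?thesis using that by simp
        qed
      next
        case xn: False
        hence "inblk l x" using that unfolding K_def by blast
        hence "inblk l (cSup ld rd R \<sigma> {x, y})" using up_cl m lx False by blast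
        thus ?thesis unfolding K_def by blast
      qed
    qed
  qed
  have conv: "({x\<in>M. cle k x} \<union> {x\<in>M. cle x k}) - {cbot, ctop} \<subseteq> K" if "k \<in> K - {cbot, ctop}" for k
  proof -
    have kb: "inblk l k" using that unfolding K_def by blast
    show ?thesis using up_cl[OF kb] down_cl[OF kb] unfolding K_def by blast
  qed
  have "is_complete_block M cle
           (\<lambda>c d. cInf ld rd R \<sigma> {c, d}) (\<lambda>c d. cSup ld rd R \<sigma> {c, d}) cbot ctop K"
    unfolding is_complete_block_def is_block_def
  proof (intro conjI)
    show "K \<subset> M" by (rule proper)
    show "\<forall>x\<in>K. \<forall>y\<in>K. cInf ld rd R \<sigma> {x, y} \<in> K \<and> cSup ld rd R \<sigma> {x, y} \<in> K"
      using meet join by blast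
    show "K - {cbot, ctop} \<noteq> {}" by (rule ne)
    show "\<forall>k\<in>K - {cbot, ctop}. ({x \<in> M. cle k x} \<union> {x \<in> M. cle x k}) - {cbot, ctop} \<subseteq> K"
      using conv by blast
    show "cbot \<in> K" unfolding K_def by blast
    show "ctop \<in> K" unfolding K_def by blast
  qed
  thus ?thesis using K_char unfolding K_def by simp
qed

end

theorem proposition31:
  fixes cj ld rd :: "nat \<Rightarrow> 'l::complete_lattice \<Rightarrow> 'l \<Rightarrow> 'l"
    and n :: nat
    and R :: "'a \<Rightarrow> 'b \<Rightarrow> 'l"
    and \<sigma> :: "'a \<Rightarrow> 'b \<Rightarrow> nat"
    and \<Lambda> :: "'k set"
    and AA :: "'k \<Rightarrow> 'a set"
    and BB :: "'k \<Rightarrow> 'b set"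
    and l :: 'k
  assumes "\<forall>i\<in>{1..n}. adjoint_triple (cj i) (ld i) (rd i)"
    and "\<forall>i\<in>{1..n}. \<forall>x. cj i x top = x \<and> cj i top x = x"
    and "\<forall>a b. \<sigma> a b \<in> {1..n}"
    and "normalized R"
    and "acc_concepts ld rd R \<sigma>"
    and "independent_decomposition cj R \<sigma> \<Lambda> AA BB"
    and "l \<in> \<Lambda>"
  shows "is_complete_block (concepts ld rd R \<sigma>) cle
           (\<lambda>c d. cInf ld rd R \<sigma> {c, d}) (\<lambda>c d. cSup ld rd R \<sigma> {c, d})
           cbot ctop (Kset ld rd R \<sigma> (AA l))"
proof -
  interpret dctx cj ld rd n R \<sigma> \<Lambda> AA BB l
    by unfold_locales (use assms in auto)
  show ?thesis by (rule block)
qed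

end
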